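(* Let $0\le\lambda\le n$ and $1\le p<\infty$, and let $\phi\in L^1(\mathbb{R}^n)$. If $f\in V_0L^{p,\lambda}$ then $f*\phi\in V_0L^{p,\lambda}$; if $f\in V_\infty L^{p,\lambda}$ then $f*\phi\in V_\infty L^{p,\lambda}$; and if $f\in V^{(\ast)}L^{p,\lambda}$ then $f*\phi\in V^{(\ast)}L^{p,\lambda}$.
   Context: $B(x,r)$ is the open ball in $\mathbb{R}^n$ with center $x$ and radius $r$. For $f\in L^1_{\mathrm{loc}}(\mathbb{R}^n)$ let $\mathfrak{M}_{p,\lambda}(f;x,r):=r^{-\lambda}\int_{B(x,r)}|f(y)|^p\,dy$. The homogeneous Morrey space $L^{p,\lambda}(\mathbb{R}^n)$ consists of $f\in L^p_{\mathrm{loc}}(\mathbb{R}^n)$ with $\|f\|_{p,\lambda}:=\sup_{x\in\mathbb{R}^n,\,r>0}\mathfrak{M}_{p,\lambda}(f;x,r)^{1/p}<\infty$. Subsets of $L^{p,\lambda}(\mathbb{R}^n)$: $V_0L^{p,\lambda}=\{f:\lim_{r\to0}\sup_{x}\mathfrak{M}_{p,\lambda}(f;x,r)=0\}$; $V_\infty L^{p,\lambda}=\{f:\lim_{r\to\infty}\sup_{x}\mathfrak{M}_{p,\lambda}(f;x,r)=0\}$; $V^{(\ast)}L^{p,\lambda}=\{f:\lim_{N\to\infty}\sup_{x\in\mathbb{R}^n}\int_{B(x,1)}|f(y)|^p\chi_{\mathbb{R}^n\setminus B(0,N)}(y)\,dy=0\}$. *)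

theory Defs
  imports "HOL-Analysis.Analysis"
begin

definition morrey_M :: "real \<Rightarrow> real \<Rightarrow> ('a::euclidean_space \<Rightarrow> real) \<Rightarrow> 'a \<Rightarrow> real \<Rightarrow> ennreal" where
  "morrey_M p lam f x r =
     ennreal (r powr (- lam)) * (\<integral>\<^sup>+ y \<in> ball x r. ennreal (\<bar>f y\<bar> powr p) \<partial>lebesgue)"

definition Lp_loc :: "real \<Rightarrow> ('a::euclidean_space \<Rightarrow> real) set" where
  "Lp_loc p = {f. f \<in> borel_measurable lebesgue \<and>
      (\<forall>x r. (\<integral>\<^sup>+ y \<in> ball x r. ennreal (\<bar>f y\<bar> powr p) \<partial>lebesgue) < \<infinity>)}"

text \<open>Homogeneous Morrey space L^{p,lambda}(R^n): the supremum (= p-th power of the norm) is finite.\<close>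
definition morrey_space :: "real \<Rightarrow> real \<Rightarrow> ('a::euclidean_space \<Rightarrow> real) set" where
  "morrey_space p lam = {f. f \<in> Lp_loc p \<and>
      (SUP x. SUP r \<in> {0<..}. morrey_M p lam f x r) < \<infinity>}"

definition V0_morrey :: "real \<Rightarrow> real \<Rightarrow> ('a::euclidean_space \<Rightarrow> real) set" where
  "V0_morrey p lam = {f. f \<in> morrey_space p lam \<and>
      ((\<lambda>r. SUP x. morrey_M p lam f x r) \<longlongrightarrow> 0) (at_right 0)}"

definition Vinf_morrey :: "real \<Rightarrow> real \<Rightarrow> ('a::euclidean_space \<Rightarrow> real) set" where
  "Vinf_morrey p lam = {f. f \<in> morrey_space p lam \<and>
      ((\<lambda>r. SUP x. morrey_M p lam f x r) \<longlongrightarrow> 0) at_top}"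

definition Vstar_morrey :: "real \<Rightarrow> real \<Rightarrow> ('a::euclidean_space \<Rightarrow> real) set" where
  "Vstar_morrey p lam = {f. f \<in> morrey_space p lam \<and>
      ((\<lambda>N::nat. SUP x. \<integral>\<^sup>+ y \<in> ball x 1.
           ennreal (\<bar>f y\<bar> powr p * indicator (- ball 0 (real N)) y) \<partial>lebesgue) \<longlonglongrightarrow> 0)}"

text \<open>Convolution (f * phi)(x) = integral of f(x - y) phi(y) dy (Bochner integral; 0 where not integrable).\<close>
definition conv :: "('a::euclidean_space \<Rightarrow> real) \<Rightarrow> ('a \<Rightarrow> real) \<Rightarrow> 'a \<Rightarrow> real" where
  "conv f phi x = (\<integral> y. f (x - y) * phi y \<partial>lebesgue)"

end

theory Submission imports Defs begin

lemma young_pt: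
  fixes x c p :: real
  assumes "0 \<le> x" "0 < c" "1 \<le> p"
  shows "x \<le> x powr p / (p * c powr (p-1)) + (1 - 1/p) * c"
proof (cases "x = 0")
  case True then show ?thesis using assms by (simp add: field_simps)
next
  case False
  then have x: "x > 0" using assms by auto
  have "(x powr p / c powr (p-1)) powr (1/p) * c powr (1 - 1/p) \<le> (1/p) * (x powr p / c powr (p-1)) + (1 - 1/p) * c"
    using assms x by (intro Youngs_inequality_0) (auto simp: field_simps)
  moreover have "(x powr p / c powr (p-1)) powr (1/p) * c powr (1 - 1/p) = x"
  proof -
    have "(x powr p / c powr (p-1)) powr (1/p) = x / c powr ((p-1)/p)"
      using assms x by (simp add: powr_divide powr_powr)
    moreover have "c powr (1 - 1/p) = c powr ((p-1)/p)" using assms by (simp add: field_simps)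
    ultimately show ?thesis using assms by simp
  qed
  ultimately show ?thesis using assms by (simp add: field_simps)
qed


lemma jensen_nn:
  fixes a w :: "'b \<Rightarrow> real" and p t Phi :: real
  assumes am[measurable]: "a \<in> borel_measurable M" and wm[measurable]: "w \<in> borel_measurable M"
    and a0: "\<And>x. 0 \<le> a x" and w0: "\<And>x. 0 \<le> w x"
    and Phi: "(\<integral>\<^sup>+ x. ennreal (w x) \<partial>M) = ennreal Phi" and Phi0: "0 \<le> Phi"
    and p: "1 \<le> p" and t0: "0 \<le> t"
    and tle: "ennreal t \<le> (\<integral>\<^sup>+ x. ennreal (a x * w x) \<partial>M)"
  shows "ennreal (t powr p) \<le> ennreal (Phi powr (p-1)) * (\<integral>\<^sup>+ x. ennreal (a x powr p * w x) \<partial>M)"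
proof -
  have zero: "t = 0" if "AE x in M. a x * w x = 0"
  proof -
    have "(\<integral>\<^sup>+ x. ennreal (a x * w x) \<partial>M) = 0"
      using that by (subst nn_integral_cong_AE[where v="\<lambda>_. 0"]) auto
    then show ?thesis using tle t0 by simp
  qed
  show ?thesis
  proof (cases "Phi = 0")
    case True
    then have "AE x in M. ennreal (w x) = 0" using Phi nn_integral_0_iff_AE[of "\<lambda>x. ennreal (w x)" M] by simp
    then have "AE x in M. w x = 0" using w0 by (auto elim!: eventually_mono)
    then have "t = 0" by (intro zero) (auto elim: eventually_mono)
    then show ?thesis using p by simp
  next
    case Phip: False
    then have Phip: "Phi > 0" using Phi0 by simp
    define I where "I = (\<integral>\<^sup>+ x. ennreal (a x powr p * w x) \<partial>M)"
    show ?thesis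
    proof (cases "I = \<infinity>")
      case True
      then show ?thesis using Phip unfolding I_def[symmetric] by (simp add: ennreal_mult_top)
    next
      case False
      then obtain Ir where Ir: "I = ennreal Ir" "0 \<le> Ir" by (cases I) auto
      show ?thesis
      proof (cases "Ir = 0")
        case True
        then have "AE x in M. ennreal (a x powr p * w x) = 0" using Ir I_def nn_integral_0_iff_AE[of "\<lambda>x. ennreal (a x powr p * w x)" M] by simp
        then have "AE x in M. a x powr p * w x = 0" using w0 by (auto elim!: eventually_mono)
        then have "t = 0" 
          by (intro zero) (auto elim!: eventually_mono simp: a0)
        then show ?thesis using p by simp
      next
        case False
        then have Irp: "Ir > 0" using Ir by simp
        define u where "u = Ir powr (1/p)"
        define v where "v = Phi powr (1/p)"
        have up: "u > 0" "v > 0" using Irp Phip by (auto simp: u_def v_def)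
        have Iu: "Ir = u powr p" using Irp p by (simp add: u_def powr_powr)
        have Pv: "Phi = v powr p" using Phip p by (simp add: v_def powr_powr)
        define c where "c = u / v"
        have cp: "c > 0" using up by (simp add: c_def)
        have "(\<integral>\<^sup>+ x. ennreal (a x * w x) \<partial>M) \<le>
              (\<integral>\<^sup>+ x. ennreal (1 / (p * c powr (p-1))) * ennreal (a x powr p * w x) + ennreal ((1 - 1/p) * c) * ennreal (w x) \<partial>M)"
        proof (intro nn_integral_mono)
          fix x
          have "a x \<le> a x powr p / (p * c powr (p-1)) + (1 - 1/p) * c"
            using young_pt[OF a0 cp p] .
          then have "a x * w x \<le> (a x powr p / (p * c powr (p-1)) + (1 - 1/p) * c) * w x"
            using w0 by (intro mult_right_mono) auto
          also have "\<dots> = 1 / (p * c powr (p-1)) * (a x powr p * w x) + ((1 - 1/p) * c) * w x"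
            by (simp add: field_simps)
          finally show "ennreal (a x * w x) \<le> ennreal (1 / (p * c powr (p-1))) * ennreal (a x powr p * w x) + ennreal ((1 - 1/p) * c) * ennreal (w x)"
            using p cp w0 a0 by (simp add: ennreal_mult'[symmetric] ennreal_plus[symmetric] del: ennreal_plus)
        qed
        also have "\<dots> = ennreal (1 / (p * c powr (p-1))) * I + ennreal ((1 - 1/p) * c) * ennreal Phi"
          unfolding I_def Phi[symmetric]
          by (subst nn_integral_add) (auto simp: nn_integral_cmult)
        also have "\<dots> = ennreal (Ir / (p * c powr (p-1)) + (1 - 1/p) * c * Phi)"
          using Ir cp p Phi0 by (simp add: ennreal_mult'[symmetric] ennreal_plus[symmetric] del: ennreal_plus)
        also have "Ir / (p * c powr (p-1)) + (1 - 1/p) * c * Phi = u * v powr (p-1)"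
        proof -
          have "c powr (p-1) = u powr (p-1) / v powr (p-1)" using up by (simp add: c_def powr_divide)
          moreover have "u powr p = u * u powr (p-1)" using up by (simp add: powr_diff)
          moreover have "v powr p = v * v powr (p-1)" using up by (simp add: powr_diff)
          ultimately show ?thesis using up p unfolding Iu Pv c_def by (simp add: field_simps)
        qed
        finally have K: "(\<integral>\<^sup>+ x. ennreal (a x * w x) \<partial>M) \<le> ennreal (u * v powr (p-1))" .
        have "t \<le> u * v powr (p-1)" using order_trans[OF tle K] up by (simp add: ennreal_le_iff)
        then have "t powr p \<le> (u * v powr (p-1)) powr p"
          using t0 p by (intro powr_mono2) auto
        also have "\<dots> = Phi powr (p-1) * Ir"
          using up p by (simp add: powr_mult powr_powr Iu Pv mult.commute)
        finally show ?thesis unfolding I_def[symmetric] Ir using Phi0 Ir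
          by (simp add: ennreal_mult'[symmetric])
      qed
    qed
  qed
qed


lemma conv_bound:
  fixes g psi :: "'a::euclidean_space \<Rightarrow> real" and chi :: "'a \<Rightarrow> ennreal"
  assumes gm[measurable]: "g \<in> borel_measurable borel" and pm[measurable]: "psi \<in> borel_measurable borel"
    and cm[measurable]: "chi \<in> borel_measurable borel"
    and Phi: "(\<integral>\<^sup>+ y. ennreal \<bar>psi y\<bar> \<partial>lborel) = ennreal Phi" and Phi0: "0 \<le> Phi" and p: "1 \<le> p"
  shows "(\<integral>\<^sup>+ z. ennreal (\<bar>\<integral> y. g (z-y) * psi y \<partial>lborel\<bar> powr p) * chi z \<partial>lborel)
     \<le> ennreal (Phi powr (p-1)) * (\<integral>\<^sup>+ y. ennreal \<bar>psi y\<bar> * (\<integral>\<^sup>+ z. ennreal (\<bar>g (z-y)\<bar> powr p) * chi z \<partial>lborel) \<partial>lborel)"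
proof -
  define C where "C = ennreal (Phi powr (p-1))"
  have pt: "ennreal (\<bar>\<integral> y. g (z-y) * psi y \<partial>lborel\<bar> powr p) \<le> C * (\<integral>\<^sup>+ y. ennreal (\<bar>g (z-y)\<bar> powr p * \<bar>psi y\<bar>) \<partial>lborel)" for z
    unfolding C_def
  proof (rule jensen_nn[where a="\<lambda>y. \<bar>g (z-y)\<bar>" and w="\<lambda>y. \<bar>psi y\<bar>"])
    show "ennreal \<bar>\<integral> y. g (z-y) * psi y \<partial>lborel\<bar> \<le> (\<integral>\<^sup>+ y. ennreal (\<bar>g (z-y)\<bar> * \<bar>psi y\<bar>) \<partial>lborel)"
    proof (cases "integrable lborel (\<lambda>y. g (z-y) * psi y)")
      case True
      from integral_norm_bound_ennreal[OF True] show ?thesis by (simp add: abs_mult)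
    next
      case False then show ?thesis by (simp add: not_integrable_integral_eq)
    qed
  qed (use Phi Phi0 p in auto)
  have meas: "(\<lambda>(z,y). ennreal (\<bar>g (z-y)\<bar> powr p * \<bar>psi y\<bar>) * chi z) \<in> borel_measurable (lborel \<Otimes>\<^sub>M lborel)"
    by measurable
  have "(\<integral>\<^sup>+ z. ennreal (\<bar>\<integral> y. g (z-y) * psi y \<partial>lborel\<bar> powr p) * chi z \<partial>lborel)
     \<le> (\<integral>\<^sup>+ z. C * ((\<integral>\<^sup>+ y. ennreal (\<bar>g (z-y)\<bar> powr p * \<bar>psi y\<bar>) \<partial>lborel) * chi z) \<partial>lborel)"
    by (intro nn_integral_mono) (simp add: mult.assoc[symmetric] mult_right_mono pt)
  also have "\<dots> = C * (\<integral>\<^sup>+ z. (\<integral>\<^sup>+ y. ennreal (\<bar>g (z-y)\<bar> powr p * \<bar>psi y\<bar>) * chi z \<partial>lborel) \<partial>lborel)"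
    by (subst nn_integral_cmult) (auto simp: nn_integral_multc)
  also have "(\<integral>\<^sup>+ z. (\<integral>\<^sup>+ y. ennreal (\<bar>g (z-y)\<bar> powr p * \<bar>psi y\<bar>) * chi z \<partial>lborel) \<partial>lborel)
      = (\<integral>\<^sup>+ y. (\<integral>\<^sup>+ z. ennreal (\<bar>g (z-y)\<bar> powr p * \<bar>psi y\<bar>) * chi z \<partial>lborel) \<partial>lborel)"
    using lborel_pair.Fubini'[OF meas] by simp
  also have "\<dots> = (\<integral>\<^sup>+ y. ennreal \<bar>psi y\<bar> * (\<integral>\<^sup>+ z. ennreal (\<bar>g (z-y)\<bar> powr p) * chi z \<partial>lborel) \<partial>lborel)"
    by (intro nn_integral_cong, subst nn_integral_cmult[symmetric])
       (auto simp: ennreal_mult' mult_ac intro!: nn_integral_cong)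
  finally show ?thesis unfolding C_def .
qed


lemma ball_borel_meas[measurable]:
  "ball (x::'a::euclidean_space) r \<in> sets borel" "cball (x::'a::euclidean_space) r \<in> sets borel"
  by auto

lemma nn_integral_translate:
  fixes G :: "'a::euclidean_space \<Rightarrow> ennreal"
  assumes [measurable]: "G \<in> borel_measurable borel"
  shows "(\<integral>\<^sup>+ z. G z \<partial>lborel) = (\<integral>\<^sup>+ w. G (w + c) \<partial>lborel)"
proof -
  have "(\<integral>\<^sup>+ z. G z \<partial>lborel) = (\<integral>\<^sup>+ z. G z \<partial>distr lborel borel ((+) c))"
    by (simp add: lborel_distr_plus)
  also have "\<dots> = (\<integral>\<^sup>+ w. G (c + w) \<partial>lborel)"
    by (subst nn_integral_distr) auto
  finally show ?thesis by (simp add: add.commute)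
qed

lemma bound1:
  fixes g psi :: "'a::euclidean_space \<Rightarrow> real"
  assumes gm[measurable]: "g \<in> borel_measurable borel" and pm[measurable]: "psi \<in> borel_measurable borel"
    and Phi: "(\<integral>\<^sup>+ y. ennreal \<bar>psi y\<bar> \<partial>lborel) = ennreal Phi" and Phi0: "0 \<le> Phi" and p: "1 \<le> p"
  shows "(\<integral>\<^sup>+ z \<in> ball x r. ennreal (\<bar>\<integral> y. g (z-y) * psi y \<partial>lborel\<bar> powr p) \<partial>lborel)
     \<le> ennreal (Phi powr p) * (SUP x'. (\<integral>\<^sup>+ w \<in> ball x' r. ennreal (\<bar>g w\<bar> powr p) \<partial>lborel))"
proof -
  define S where "S = (SUP x'. (\<integral>\<^sup>+ w \<in> ball x' r. ennreal (\<bar>g w\<bar> powr p) \<partial>lborel))"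
  have inner: "(\<integral>\<^sup>+ z. ennreal (\<bar>g (z-y)\<bar> powr p) * indicator (ball x r) z \<partial>lborel) \<le> S" for y
  proof -
    have "(\<integral>\<^sup>+ z. ennreal (\<bar>g (z-y)\<bar> powr p) * indicator (ball x r) z \<partial>lborel)
        = (\<integral>\<^sup>+ w. ennreal (\<bar>g (w + y - y)\<bar> powr p) * indicator (ball x r) (w + y) \<partial>lborel)"
      by (rule nn_integral_translate) measurable
    also have "\<dots> = (\<integral>\<^sup>+ w \<in> ball (x - y) r. ennreal (\<bar>g w\<bar> powr p) \<partial>lborel)"
      by (intro nn_integral_cong) (auto simp: indicator_def dist_norm algebra_simps)
    also have "\<dots> \<le> S" unfolding S_def by (rule SUP_upper) auto
    finally show ?thesis .
  qed
  have "(\<integral>\<^sup>+ z \<in> ball x r. ennreal (\<bar>\<integral> y. g (z-y) * psi y \<partial>lborel\<bar> powr p) \<partial>lborel)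
     \<le> ennreal (Phi powr (p-1)) * (\<integral>\<^sup>+ y. ennreal \<bar>psi y\<bar> * (\<integral>\<^sup>+ z. ennreal (\<bar>g (z-y)\<bar> powr p) * indicator (ball x r) z \<partial>lborel) \<partial>lborel)"
    by (rule conv_bound[OF gm pm _ Phi Phi0 p]) measurable
  also have "\<dots> \<le> ennreal (Phi powr (p-1)) * (\<integral>\<^sup>+ y. ennreal \<bar>psi y\<bar> * S \<partial>lborel)"
    by (intro mult_left_mono nn_integral_mono mult_left_mono inner) auto
  also have "\<dots> = ennreal (Phi powr (p-1)) * ennreal Phi * S"
    by (simp add: nn_integral_multc Phi mult.assoc)
  also have "ennreal (Phi powr (p-1)) * ennreal Phi = ennreal (Phi powr p)"
  proof (cases "Phi = 0")
    case False
    then have "Phi powr (p-1) * Phi = Phi powr p" using Phi0 by (simp add: powr_diff)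
    then show ?thesis using Phi0 by (simp add: ennreal_mult'[symmetric])
  qed simp
  finally show ?thesis unfolding S_def .
qed

lemma bound2:
  fixes g psi :: "'a::euclidean_space \<Rightarrow> real" and N R :: nat
  assumes gm[measurable]: "g \<in> borel_measurable borel" and pm[measurable]: "psi \<in> borel_measurable borel"
    and Phi: "(\<integral>\<^sup>+ y. ennreal \<bar>psi y\<bar> \<partial>lborel) = ennreal Phi" and Phi0: "0 \<le> Phi" and p: "1 \<le> p"
    and RN: "R \<le> N"
  shows "(\<integral>\<^sup>+ z \<in> ball x 1. ennreal (\<bar>\<integral> y. g (z-y) * psi y \<partial>lborel\<bar> powr p * indicator (- ball 0 (real N)) z) \<partial>lborel)
     \<le> ennreal (Phi powr (p-1)) * (ennreal Phi * (SUP x'. (\<integral>\<^sup>+ w \<in> ball x' 1. ennreal (\<bar>g w\<bar> powr p * indicator (- ball 0 (real (N - R))) w) \<partial>lborel))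
        + (\<integral>\<^sup>+ y. ennreal \<bar>psi y\<bar> * indicator (- cball 0 (real R)) y \<partial>lborel) * (SUP x'. (\<integral>\<^sup>+ w \<in> ball x' 1. ennreal (\<bar>g w\<bar> powr p) \<partial>lborel)))"
proof -
  define S where "S = (SUP x'. (\<integral>\<^sup>+ w \<in> ball x' 1. ennreal (\<bar>g w\<bar> powr p) \<partial>lborel))"
  define T where "T = (SUP x'. (\<integral>\<^sup>+ w \<in> ball x' 1. ennreal (\<bar>g w\<bar> powr p * indicator (- ball 0 (real (N - R))) w) \<partial>lborel))"
  define chi :: "'a \<Rightarrow> ennreal" where "chi z = indicator (- ball 0 (real N)) z * indicator (ball x 1) z" for z
  have chim[measurable]: "chi \<in> borel_measurable borel" unfolding chi_def by measurable
  have inner: "(\<integral>\<^sup>+ z. ennreal (\<bar>g (z-y)\<bar> powr p) * chi z \<partial>lborel) \<le> T + indicator (- cball 0 (real R)) y * S" for y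
  proof -
    have "(\<integral>\<^sup>+ z. ennreal (\<bar>g (z-y)\<bar> powr p) * chi z \<partial>lborel)
        = (\<integral>\<^sup>+ w. ennreal (\<bar>g (w + y - y)\<bar> powr p) * chi (w + y) \<partial>lborel)"
      by (rule nn_integral_translate) measurable
    also have "\<dots> = (\<integral>\<^sup>+ w. ennreal (\<bar>g w\<bar> powr p) * indicator (- ball 0 (real N)) (w + y) * indicator (ball (x - y) 1) w \<partial>lborel)"
      by (intro nn_integral_cong) (auto simp: chi_def indicator_def dist_norm algebra_simps)
    also have "\<dots> \<le> T + indicator (- cball 0 (real R)) y * S"
    proof (cases "y \<in> cball 0 (real R)")
      case True
      have "(\<integral>\<^sup>+ w. ennreal (\<bar>g w\<bar> powr p) * indicator (- ball 0 (real N)) (w + y) * indicator (ball (x - y) 1) w \<partial>lborel)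
          \<le> (\<integral>\<^sup>+ w \<in> ball (x - y) 1. ennreal (\<bar>g w\<bar> powr p * indicator (- ball 0 (real (N - R))) w) \<partial>lborel)"
      proof (intro nn_integral_mono)
        fix w
        have "indicator (- ball 0 (real N)) (w + y) \<le> (indicator (- ball 0 (real (N - R))) w :: real)"
        proof (cases "w + y \<in> ball 0 (real N)")
          case False
          then have "norm (w + y) \<ge> real N" using norm_minus_cancel[of "w+y"] by (simp add: dist_norm)
          moreover have "norm y \<le> real R" using True by (simp add: dist_norm)
          moreover have "norm (w + y) \<le> norm w + norm y" by (rule norm_triangle_ineq)
          ultimately have "norm w \<ge> real (N - R)" using RN by (simp add: of_nat_diff)
          then have "w \<notin> ball 0 (real (N - R))" by (simp add: dist_norm)
          then show ?thesis by (simp add: indicator_def)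
        qed (simp add: indicator_def)
        then show "ennreal (\<bar>g w\<bar> powr p) * indicator (- ball 0 (real N)) (w + y) * indicator (ball (x - y) 1) w
              \<le> ennreal (\<bar>g w\<bar> powr p * indicator (- ball 0 (real (N - R))) w) * indicator (ball (x - y) 1) w"
          by (auto simp: indicator_def)
      qed
      also have "\<dots> \<le> T" unfolding T_def by (rule SUP_upper) auto
      finally show ?thesis by (simp add: add_increasing2)
    next
      case False
      have "(\<integral>\<^sup>+ w. ennreal (\<bar>g w\<bar> powr p) * indicator (- ball 0 (real N)) (w + y) * indicator (ball (x - y) 1) w \<partial>lborel)
          \<le> (\<integral>\<^sup>+ w \<in> ball (x - y) 1. ennreal (\<bar>g w\<bar> powr p) \<partial>lborel)"
        by (intro nn_integral_mono) (auto simp: indicator_def)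
      also have "\<dots> \<le> S" unfolding S_def by (rule SUP_upper) auto
      finally show ?thesis using False by (simp add: add_increasing)
    qed
    finally show ?thesis .
  qed
  have "(\<integral>\<^sup>+ z \<in> ball x 1. ennreal (\<bar>\<integral> y. g (z-y) * psi y \<partial>lborel\<bar> powr p * indicator (- ball 0 (real N)) z) \<partial>lborel)
     = (\<integral>\<^sup>+ z. ennreal (\<bar>\<integral> y. g (z-y) * psi y \<partial>lborel\<bar> powr p) * chi z \<partial>lborel)"
    by (intro nn_integral_cong) (auto simp: chi_def indicator_def)
  also have "\<dots> \<le> ennreal (Phi powr (p-1)) * (\<integral>\<^sup>+ y. ennreal \<bar>psi y\<bar> * (\<integral>\<^sup>+ z. ennreal (\<bar>g (z-y)\<bar> powr p) * chi z \<partial>lborel) \<partial>lborel)"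
    by (rule conv_bound[OF gm pm chim Phi Phi0 p])
  also have "\<dots> \<le> ennreal (Phi powr (p-1)) * (\<integral>\<^sup>+ y. ennreal \<bar>psi y\<bar> * T + (ennreal \<bar>psi y\<bar> * indicator (- cball 0 (real R)) y) * S \<partial>lborel)"
    by (intro mult_left_mono nn_integral_mono order_trans[OF mult_left_mono[OF inner]])
       (auto simp: distrib_left mult.assoc)
  also have "(\<integral>\<^sup>+ y. ennreal \<bar>psi y\<bar> * T + (ennreal \<bar>psi y\<bar> * indicator (- cball 0 (real R)) y) * S \<partial>lborel)
      = ennreal Phi * T + (\<integral>\<^sup>+ y. ennreal \<bar>psi y\<bar> * indicator (- cball 0 (real R)) y \<partial>lborel) * S"
    by (subst nn_integral_add) (auto simp: nn_integral_multc Phi)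
  finally show ?thesis unfolding S_def T_def .
qed


lemma lborel_reflect: "distr lborel borel (\<lambda>y. z - y) = (lborel :: 'a::euclidean_space measure)"
proof -
  have "(lborel :: 'a measure) = density (distr lborel borel (\<lambda>x. z + (-1) *\<^sub>R x)) (\<lambda>_. \<bar>-1::real\<bar>^DIM('a))"
    by (rule lborel_affine) simp
  then show ?thesis by (simp add: density_1)
qed

lemma reflect_AE:
  fixes z :: "'a::euclidean_space"
  assumes "AE w in lborel. P w" shows "AE y in lborel. P (z - y)"
proof -
  from assms obtain N where N: "{x \<in> space lborel. \<not> P x} \<subseteq> N" "emeasure lborel N = 0" "N \<in> sets lborel"
    by (rule AE_E)
  have m: "(\<lambda>y. z - y) \<in> borel_measurable (borel :: 'a measure)" by measurable
  have "emeasure lborel ((\<lambda>y. z - y) -` N) = emeasure (distr lborel borel (\<lambda>y. z - y)) N"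
    using N m by (subst emeasure_distr) auto
  also have "\<dots> = 0" using N by (simp add: lborel_reflect)
  finally have "(\<lambda>y. z - y) -` N \<in> null_sets lborel"
    using N measurable_sets[OF m, of N] by (auto simp: null_sets_def)
  then show ?thesis
    by (rule AE_I') (use N in auto)
qed

lemma borel_version:
  fixes f :: "'a::euclidean_space \<Rightarrow> real"
  assumes "f \<in> borel_measurable lebesgue"
  obtains g where "g \<in> borel_measurable borel" "AE x in lborel. f x = g x"
  using completion_ex_borel_measurable_real[OF assms] by auto

lemma conv_eq:
  fixes f g phi psi :: "'a::euclidean_space \<Rightarrow> real"
  assumes fm: "f \<in> borel_measurable lebesgue" and phim: "phi \<in> borel_measurable lebesgue"
    and gm[measurable]: "g \<in> borel_measurable borel" and pm[measurable]: "psi \<in> borel_measurable borel"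
    and fg: "AE x in lborel. f x = g x" and pp: "AE x in lborel. phi x = psi x"
  shows "conv f phi z = (\<integral> y. g (z - y) * psi y \<partial>lborel)"
proof -
  define T where "T = (\<lambda>x::'a. z + (\<Sum>j\<in>Basis. ((\<lambda>_. -1::real) j * (x \<bullet> j)) *\<^sub>R j))"
  have T: "T = (\<lambda>x. z - x)"
  proof
    fix x :: 'a
    have "(\<Sum>j\<in>Basis. ((\<lambda>_. -1::real) j * (x \<bullet> j)) *\<^sub>R j) = - (\<Sum>j\<in>Basis. (x \<bullet> j) *\<^sub>R j)"
      by (simp add: sum_negf[symmetric])
    then show "T x = z - x" unfolding T_def by (simp add: euclidean_representation)
  qed
  have Tm: "T \<in> lebesgue \<rightarrow>\<^sub>M lebesgue"
    unfolding T_def by (rule lebesgue_affine_measurable) simp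
  have f1: "(\<lambda>y. f (z - y)) \<in> borel_measurable lebesgue"
    using measurable_comp[OF Tm fm] unfolding T by (simp add: comp_def)
  have ae: "AE y in lborel. f (z - y) * phi y = g (z - y) * psi y"
    using reflect_AE[OF fg, of z] pp by eventually_elim simp
  have "conv f phi z = (\<integral> y. g (z - y) * psi y \<partial>lebesgue)"
    unfolding conv_def
  proof (rule integral_cong_AE)
    show "(\<lambda>y. f (z - y) * phi y) \<in> borel_measurable lebesgue" using f1 phim by measurable
    show "(\<lambda>y. g (z - y) * psi y) \<in> borel_measurable lebesgue"
      by (rule measurable_completion) measurable
    show "AE y in lebesgue. f (z - y) * phi y = g (z - y) * psi y"
      using ae by (simp add: AE_completion_iff)
  qed
  also have "\<dots> = (\<integral> y. g (z - y) * psi y \<partial>lborel)"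
    by (rule integral_completion) measurable
  finally show ?thesis .
qed

lemma nn_eq_version:
  fixes f g :: "'a::euclidean_space \<Rightarrow> real" and F :: "real \<Rightarrow> 'a \<Rightarrow> ennreal"
  assumes "AE x in lborel. f x = g x"
  shows "(\<integral>\<^sup>+ y. F (f y) y \<partial>lebesgue) = (\<integral>\<^sup>+ y. F (g y) y \<partial>lborel)"
proof -
  have "(\<integral>\<^sup>+ y. F (f y) y \<partial>lebesgue) = (\<integral>\<^sup>+ y. F (g y) y \<partial>lebesgue)"
    using assms by (intro nn_integral_cong_AE) (auto simp: AE_completion_iff elim!: eventually_mono)
  then show ?thesis by (simp add: nn_integral_completion)
qed

lemma conv_measurable:
  fixes g psi :: "'a::euclidean_space \<Rightarrow> real"
  assumes gm[measurable]: "g \<in> borel_measurable borel" and pm[measurable]: "psi \<in> borel_measurable borel"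
  shows "(\<lambda>z. \<integral> y. g (z - y) * psi y \<partial>lborel) \<in> borel_measurable lebesgue"
proof -
  have "(\<lambda>z. \<integral> y. g (z - y) * psi y \<partial>lborel) \<in> borel_measurable lborel"
    by measurable
  then show ?thesis by (rule measurable_completion)
qed


lemma ennreal_half_ex:
  assumes "(e::ennreal) > 0" obtains d :: real where "d > 0" "ennreal d + ennreal d \<le> e"
proof (cases e)
  case (real r)
  then have "r > 0" using assms by simp
  then show ?thesis using real by (intro that[of "r/2"]) (auto simp: ennreal_plus[symmetric] simp del: ennreal_plus)
next
  case top then show ?thesis by (intro that[of 1]) auto
qed

lemma eps_arg:
  fixes Q T tl :: "nat \<Rightarrow> ennreal" and C P S :: ennreal
  assumes bound: "\<And>N R. R \<le> N \<Longrightarrow> Q N \<le> C * (P * T (N - R) + tl R * S)"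
    and T: "T \<longlonglongrightarrow> 0" and tl: "tl \<longlonglongrightarrow> 0" and fin: "C < \<infinity>" "P < \<infinity>" "S < \<infinity>"
  shows "Q \<longlonglongrightarrow> 0"
proof (rule order_tendstoI)
  fix a :: ennreal assume "a < 0" then show "eventually (\<lambda>N. a < Q N) sequentially" by simp
next
  fix e :: ennreal assume "0 < e"
  then obtain d where d: "d > 0" "ennreal d + ennreal d \<le> e" by (rule ennreal_half_ex)
  have "(\<lambda>R. C * (tl R * S)) \<longlonglongrightarrow> C * (0 * S)"
    using fin by (intro ennreal_tendsto_cmult tendsto_mult_ennreal tl tendsto_const) auto
  then have "eventually (\<lambda>R. C * (tl R * S) < ennreal d) sequentially"
    using d by (intro order_tendstoD) auto
  then obtain R where R: "C * (tl R * S) < ennreal d" by (auto simp: eventually_sequentially)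
  have "(\<lambda>N. T (N - R)) \<longlonglongrightarrow> 0"
    by (rule filterlim_compose[OF T filterlim_minus_const_nat_at_top])
  then have "(\<lambda>N. C * (P * T (N - R))) \<longlonglongrightarrow> C * (P * 0)"
    using fin by (intro ennreal_tendsto_cmult) auto
  then have "eventually (\<lambda>N. C * (P * T (N - R)) < ennreal d) sequentially"
    using d by (intro order_tendstoD) auto
  moreover have "eventually (\<lambda>N. R \<le> N) sequentially" by (rule eventually_ge_at_top)
  ultimately show "eventually (\<lambda>N. Q N < e) sequentially"
  proof eventually_elim
    case (elim N)
    have "Q N \<le> C * (P * T (N - R)) + C * (tl R * S)"
      using bound[OF elim(2)] by (simp add: distrib_left)
    also have "\<dots> < ennreal (d + d)"
      using elim(1) R by (rule add_mono_ennreal)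
    also have "\<dots> \<le> e" using d by (subst ennreal_plus) auto
    finally show ?case .
  qed
qed

lemma tail_tendsto:
  fixes psi :: "'a::euclidean_space \<Rightarrow> real"
  assumes [measurable]: "psi \<in> borel_measurable borel" and fin: "(\<integral>\<^sup>+ y. ennreal \<bar>psi y\<bar> \<partial>lborel) < \<infinity>"
  shows "(\<lambda>R::nat. \<integral>\<^sup>+ y. ennreal \<bar>psi y\<bar> * indicator (- cball 0 (real R)) y \<partial>lborel) \<longlonglongrightarrow> 0"
proof -
  define h where "h R y = ennreal \<bar>psi y\<bar> * indicator (- cball 0 (real R)) y" for R :: nat and y :: 'a
  have dec: "decseq h"
    by (rule decseq_SucI) (auto simp: le_fun_def h_def indicator_def intro!: mult_left_mono)
  have "(\<lambda>R. integral\<^sup>N lborel (h R)) \<longlonglongrightarrow> (INF R. integral\<^sup>N lborel (h R))"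
  proof (rule LIMSEQ_INF, rule decseq_SucI)
    fix n show "integral\<^sup>N lborel (h (Suc n)) \<le> integral\<^sup>N lborel (h n)"
      using decseq_SucD[OF dec, of n] by (intro nn_integral_mono) (auto simp: le_fun_def)
  qed
  also have "(INF R. integral\<^sup>N lborel (h R)) = (\<integral>\<^sup>+ y. (INF R. h R y) \<partial>lborel)"
  proof (rule nn_integral_monotone_convergence_INF_decseq[symmetric, OF dec])
    fix i show "h i \<in> borel_measurable lborel" unfolding h_def by measurable
    have "integral\<^sup>N lborel (h i) \<le> (\<integral>\<^sup>+ y. ennreal \<bar>psi y\<bar> \<partial>lborel)"
      unfolding h_def by (intro nn_integral_mono) (auto simp: indicator_def)
    then show "integral\<^sup>N lborel (h i) < \<infinity>" using fin by (rule le_less_trans)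
  qed
  also have "\<dots> = 0"
  proof -
    have "(INF R. h R y) = 0" for y
    proof -
      obtain R :: nat where "norm y \<le> real R" using real_arch_simple by blast
      then have "h R y = 0" by (simp add: h_def indicator_def dist_norm)
      then show ?thesis by (metis INF_lower UNIV_I le_zero_eq)
    qed
    then show ?thesis by simp
  qed
  finally show ?thesis unfolding h_def .
qed


lemma ball_eq1:
  fixes f g :: "'a::euclidean_space \<Rightarrow> real"
  assumes "AE x in lborel. f x = g x"
  shows "(\<integral>\<^sup>+ y \<in> ball x r. ennreal (\<bar>f y\<bar> powr p) \<partial>lebesgue) = (\<integral>\<^sup>+ y \<in> ball x r. ennreal (\<bar>g y\<bar> powr p) \<partial>lborel)"
  using nn_eq_version[OF assms, of "\<lambda>v y. ennreal (\<bar>v\<bar> powr p) * indicator (ball x r) y"] by simp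

lemma ball_eq2:
  fixes f g :: "'a::euclidean_space \<Rightarrow> real"
  assumes "AE x in lborel. f x = g x"
  shows "(\<integral>\<^sup>+ y \<in> ball x 1. ennreal (\<bar>f y\<bar> powr p * indicator (- ball 0 M) y) \<partial>lebesgue)
       = (\<integral>\<^sup>+ y \<in> ball x 1. ennreal (\<bar>g y\<bar> powr p * indicator (- ball 0 M) y) \<partial>lborel)"
  using nn_eq_version[OF assms, of "\<lambda>v y. ennreal (\<bar>v\<bar> powr p * indicator (- ball 0 M) y) * indicator (ball x 1) y"] by simp

lemma conv_setup:
  fixes f phi :: "'a::euclidean_space \<Rightarrow> real"
  assumes "f \<in> borel_measurable lebesgue" "integrable lebesgue phi"
  obtains g psi Phi where "g \<in> borel_measurable borel" "psi \<in> borel_measurable borel"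
    "AE x in lborel. f x = g x" "AE x in lborel. phi x = psi x"
    "(\<integral>\<^sup>+ y. ennreal \<bar>psi y\<bar> \<partial>lborel) = ennreal Phi" "0 \<le> Phi"
    "\<And>z. conv f phi z = (\<integral> y. g (z - y) * psi y \<partial>lborel)"
proof -
  have phim: "phi \<in> borel_measurable lebesgue" using assms(2) by auto
  obtain g where g: "g \<in> borel_measurable borel" "AE x in lborel. f x = g x"
    using borel_version[OF assms(1)] by blast
  obtain psi where psi: "psi \<in> borel_measurable borel" "AE x in lborel. phi x = psi x"
    using borel_version[OF phim] by blast
  define Phi where "Phi = (\<integral> y. \<bar>phi y\<bar> \<partial>lebesgue)"
  have "(\<integral>\<^sup>+ y. ennreal \<bar>psi y\<bar> \<partial>lborel) = (\<integral>\<^sup>+ y. ennreal \<bar>phi y\<bar> \<partial>lebesgue)"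
    using nn_eq_version[OF psi(2), of "\<lambda>v y. ennreal \<bar>v\<bar>"] by simp
  also have "\<dots> = ennreal Phi" unfolding Phi_def
    using assms(2) by (intro nn_integral_eq_integral) auto
  finally show ?thesis
    using that[OF g(1) psi(1) g(2) psi(2)] conv_eq[OF assms(1) phim g(1) psi(1) g(2) psi(2)]
    by (simp add: Phi_def)
qed

lemma key:
  fixes p lam :: real and phi f :: "'a::euclidean_space \<Rightarrow> real"
  assumes p: "1 \<le> p" and phi: "integrable lebesgue phi" and f: "f \<in> morrey_space p lam"
  obtains K where "K < \<infinity>" "conv f phi \<in> morrey_space p lam"
    "\<And>r. (SUP x. morrey_M p lam (conv f phi) x r) \<le> K * (SUP x. morrey_M p lam f x r)"
proof -
  have fm: "f \<in> borel_measurable lebesgue" and fsup: "(SUP x. SUP r \<in> {0<..}. morrey_M p lam f x r) < \<infinity>"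
    using f by (auto simp: morrey_space_def Lp_loc_def)
  obtain g psi Phi where gm[measurable]: "g \<in> borel_measurable borel" and pm[measurable]: "psi \<in> borel_measurable borel"
    and fg: "AE x in lborel. f x = g x" and pp: "AE x in lborel. phi x = psi x"
    and Phi: "(\<integral>\<^sup>+ y. ennreal \<bar>psi y\<bar> \<partial>lborel) = ennreal Phi" and Phi0: "0 \<le> Phi"
    and cv: "\<And>z. conv f phi z = (\<integral> y. g (z - y) * psi y \<partial>lborel)"
    using conv_setup[OF fm phi] by blast
  define K where "K = ennreal (Phi powr p)"
  define S where "S r = (SUP x'. (\<integral>\<^sup>+ w \<in> ball x' r. ennreal (\<bar>g w\<bar> powr p) \<partial>lborel))" for r
  have mf: "morrey_M p lam f x r = ennreal (r powr (-lam)) * (\<integral>\<^sup>+ w \<in> ball x r. ennreal (\<bar>g w\<bar> powr p) \<partial>lborel)" for x r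
    unfolding morrey_M_def ball_eq1[OF fg] ..
  have supf: "(SUP x. morrey_M p lam f x r) = ennreal (r powr (-lam)) * S r" for r
    unfolding mf S_def by (simp add: SUP_mult_left_ennreal)
  have intc: "(\<integral>\<^sup>+ y \<in> ball x r. ennreal (\<bar>conv f phi y\<bar> powr p) \<partial>lebesgue) \<le> K * S r" for x r
    unfolding cv K_def S_def nn_integral_completion
    by (rule bound1[OF gm pm Phi Phi0 p])
  have mc: "morrey_M p lam (conv f phi) x r \<le> K * (SUP x. morrey_M p lam f x r)" for x r
  proof -
    have "morrey_M p lam (conv f phi) x r \<le> ennreal (r powr (-lam)) * (K * S r)"
      unfolding morrey_M_def by (intro mult_left_mono intc) auto
    then show ?thesis unfolding supf by (simp add: mult_ac)
  qed
  have supc: "(SUP x. morrey_M p lam (conv f phi) x r) \<le> K * (SUP x. morrey_M p lam f x r)" for r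
    by (rule SUP_least) (rule mc)
  have Kfin: "K < \<infinity>" unfolding K_def by simp
  have Sfin: "S r < \<infinity>" if "r > 0" for r
  proof -
    have "S r = ennreal (r powr lam) * (ennreal (r powr (-lam)) * S r)"
      using that by (simp add: mult.assoc[symmetric] ennreal_mult'[symmetric] powr_minus)
    also have "\<dots> = ennreal (r powr lam) * (SUP x. morrey_M p lam f x r)" by (simp add: supf)
    also have "(SUP x. morrey_M p lam f x r) \<le> (SUP x. SUP r \<in> {0<..}. morrey_M p lam f x r)"
      using that by (intro SUP_mono) (auto intro!: SUP_upper)
    finally have "S r \<le> ennreal (r powr lam) * (SUP x. SUP r \<in> {0<..}. morrey_M p lam f x r)"
      by (simp add: mult_left_mono)
    also have "\<dots> < \<infinity>" using fsup by (simp add: ennreal_mult_less_top)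
    finally show ?thesis .
  qed
  have cm: "conv f phi \<in> borel_measurable lebesgue"
    unfolding cv by (rule conv_measurable[OF gm pm])
  have loc: "(\<integral>\<^sup>+ y \<in> ball x r. ennreal (\<bar>conv f phi y\<bar> powr p) \<partial>lebesgue) < \<infinity>" for x r
  proof (cases "r > 0")
    case True
    have "K * S r < \<infinity>" using Kfin Sfin[OF True] by (simp add: ennreal_mult_less_top)
    then show ?thesis using intc[of x r] by (rule le_less_trans[rotated])
  next
    case False
    then have "ball x r = {}" by auto
    then show ?thesis by (simp del: ball_eq_empty)
  qed
  have "(SUP x. SUP r \<in> {0<..}. morrey_M p lam (conv f phi) x r) \<le> K * (SUP x. SUP r \<in> {0<..}. morrey_M p lam f x r)"
  proof (intro SUP_least)
    fix x and r :: real assume "r \<in> {0<..}"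
    have "morrey_M p lam (conv f phi) x r \<le> K * (SUP x. morrey_M p lam f x r)" by (rule mc)
    also have "\<dots> \<le> K * (SUP x. SUP r \<in> {0<..}. morrey_M p lam f x r)"
      using \<open>r \<in> {0<..}\<close> by (intro mult_left_mono SUP_mono) (auto intro!: SUP_upper)
    finally show "morrey_M p lam (conv f phi) x r \<le> K * (SUP x. SUP r \<in> {0<..}. morrey_M p lam f x r)" .
  qed
  also have "\<dots> < \<infinity>" using Kfin fsup by (simp add: ennreal_mult_less_top)
  finally have "conv f phi \<in> morrey_space p lam"
    using cm loc by (auto simp: morrey_space_def Lp_loc_def)
  then show ?thesis using that Kfin supc by blast
qed


lemma vstar:
  fixes p lam :: real and phi f :: "'a::euclidean_space \<Rightarrow> real"
  assumes p: "1 \<le> p" and phi: "integrable lebesgue phi" and f: "f \<in> Vstar_morrey p lam"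
  shows "conv f phi \<in> Vstar_morrey p lam"
proof -
  have fM: "f \<in> morrey_space p lam" using f by (simp add: Vstar_morrey_def)
  obtain K where cM: "conv f phi \<in> morrey_space p lam" using key[OF p phi fM] by blast
  have fm: "f \<in> borel_measurable lebesgue" and fsup: "(SUP x. SUP r \<in> {0<..}. morrey_M p lam f x r) < \<infinity>"
    using fM by (auto simp: morrey_space_def Lp_loc_def)
  obtain g psi Phi where gm[measurable]: "g \<in> borel_measurable borel" and pm[measurable]: "psi \<in> borel_measurable borel"
    and fg: "AE x in lborel. f x = g x" and pp: "AE x in lborel. phi x = psi x"
    and Phi: "(\<integral>\<^sup>+ y. ennreal \<bar>psi y\<bar> \<partial>lborel) = ennreal Phi" and Phi0: "0 \<le> Phi"
    and cv: "\<And>z. conv f phi z = (\<integral> y. g (z - y) * psi y \<partial>lborel)"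
    using conv_setup[OF fm phi] by blast
  define S where "S = (SUP x'. (\<integral>\<^sup>+ w \<in> ball x' 1. ennreal (\<bar>g w\<bar> powr p) \<partial>lborel))"
  define T where "T M = (SUP x'. (\<integral>\<^sup>+ w \<in> ball x' 1. ennreal (\<bar>g w\<bar> powr p * indicator (- ball 0 (real M)) w) \<partial>lborel))" for M :: nat
  define tl where "tl R = (\<integral>\<^sup>+ y. ennreal \<bar>psi y\<bar> * indicator (- cball 0 (real R)) y \<partial>lborel)" for R :: nat
  define Q where "Q = (\<lambda>N::nat. SUP x. \<integral>\<^sup>+ y \<in> ball x 1. ennreal (\<bar>conv f phi y\<bar> powr p * indicator (- ball 0 (real N)) y) \<partial>lebesgue)"
  have T: "T \<longlonglongrightarrow> 0"
  proof -
    have "T = (\<lambda>N. SUP x. \<integral>\<^sup>+ y \<in> ball x 1. ennreal (\<bar>f y\<bar> powr p * indicator (- ball 0 (real N)) y) \<partial>lebesgue)"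
      unfolding T_def ball_eq2[OF fg] ..
    then show ?thesis using f by (simp add: Vstar_morrey_def)
  qed
  have tl: "tl \<longlonglongrightarrow> 0" unfolding tl_def by (rule tail_tendsto) (use Phi in auto)
  have Sfin: "S < \<infinity>"
  proof -
    have "S = (SUP x. morrey_M p lam f x 1)"
      unfolding S_def morrey_M_def ball_eq1[OF fg] by simp
    also have "\<dots> \<le> (SUP x. SUP r \<in> {0<..}. morrey_M p lam f x r)"
    proof (rule SUP_mono)
      fix x show "\<exists>m\<in>UNIV. morrey_M p lam f x 1 \<le> (SUP r\<in>{0<..}. morrey_M p lam f m r)"
        by (rule bexI[of _ x]) (auto intro: SUP_upper)
    qed
    finally show ?thesis using fsup by (rule le_less_trans)
  qed
  have bound: "Q N \<le> ennreal (Phi powr (p-1)) * (ennreal Phi * T (N - R) + tl R * S)" if "R \<le> N" for N R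
    unfolding Q_def
  proof (rule SUP_least)
    fix x
    show "(\<integral>\<^sup>+ y \<in> ball x 1. ennreal (\<bar>conv f phi y\<bar> powr p * indicator (- ball 0 (real N)) y) \<partial>lebesgue)
        \<le> ennreal (Phi powr (p-1)) * (ennreal Phi * T (N - R) + tl R * S)"
      unfolding cv nn_integral_completion T_def tl_def S_def
      by (rule bound2[OF gm pm Phi Phi0 p that])
  qed
  have "Q \<longlonglongrightarrow> 0"
    by (rule eps_arg[OF bound T tl]) (use Sfin in \<open>auto simp: infinity_ennreal_def\<close>)
  then show ?thesis using cM by (simp add: Vstar_morrey_def Q_def)
qed

theorem theorem3p8:
  fixes p lam :: real and phi f :: "'a::euclidean_space \<Rightarrow> real"
  assumes "0 \<le> lam" and "lam \<le> real DIM('a)" and "1 \<le> p"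
    and "integrable lebesgue phi"
  shows "(f \<in> V0_morrey p lam \<longrightarrow> conv f phi \<in> V0_morrey p lam)
       \<and> (f \<in> Vinf_morrey p lam \<longrightarrow> conv f phi \<in> Vinf_morrey p lam)
       \<and> (f \<in> Vstar_morrey p lam \<longrightarrow> conv f phi \<in> Vstar_morrey p lam)"
proof (intro conjI impI)
  have lim: "((\<lambda>r. SUP x. morrey_M p lam (conv f phi) x r) \<longlongrightarrow> 0) F \<and> conv f phi \<in> morrey_space p lam"
    if fM: "f \<in> morrey_space p lam" and fl: "((\<lambda>r. SUP x. morrey_M p lam f x r) \<longlongrightarrow> 0) F" for F
  proof -
    obtain K where K: "K < \<infinity>" "conv f phi \<in> morrey_space p lam"
      "\<And>r. (SUP x. morrey_M p lam (conv f phi) x r) \<le> K * (SUP x. morrey_M p lam f x r)"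
      using key[OF assms(3,4) fM] by blast
    have "((\<lambda>r. K * (SUP x. morrey_M p lam f x r)) \<longlongrightarrow> K * 0) F"
      using K(1) fl by (intro ennreal_tendsto_cmult) (auto simp: top_unique)
    then have h: "((\<lambda>r. K * (SUP x. morrey_M p lam f x r)) \<longlongrightarrow> 0) F" by simp
    have "((\<lambda>r. SUP x. morrey_M p lam (conv f phi) x r) \<longlongrightarrow> 0) F"
      by (rule tendsto_sandwich[where f="\<lambda>_. 0" and h="\<lambda>r. K * (SUP x. morrey_M p lam f x r)", OF _ _ _ h])
         (auto intro: always_eventually K(3))
    then show ?thesis using K(2) by blast
  qed
  show "conv f phi \<in> V0_morrey p lam" if "f \<in> V0_morrey p lam"
    using lim[of "at_right 0"] that by (simp add: V0_morrey_def)
  show "conv f phi \<in> Vinf_morrey p lam" if "f \<in> Vinf_morrey p lam"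
    using lim[of at_top] that by (simp add: Vinf_morrey_def)
  show "conv f phi \<in> Vstar_morrey p lam" if "f \<in> Vstar_morrey p lam"
    by (rule vstar[OF assms(3,4) that])
qed

end
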